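(* Let $N\ge2$, $I_1,\dots,I_N,R,M$ be positive integers, $I=I_1\cdots I_N$. For a positive integer $b$ define \[ W_{ub}(b)=I+(N+1)\Big(\prod_{k=1}^N\Big\lceil\frac{I_k}{b}\Big\rceil\Big)bR,\quad W_{lb1}=\frac{NIR}{3^{2-1/N}M^{1-1/N}}-M,\quad W_{lb2}=I+\sum_{k=1}^N I_kR-2M . \] Suppose there are constants $\alpha,\beta,\gamma,\delta,\epsilon>0$ with $\alpha<1$, $\beta<\alpha^{1-1/N}$, $\gamma>1+1/N$, $\delta<1+R\sum_k I_k/I$, $\epsilon<3^{-(2-1/N)}$, such that \[ M\ge\Big(\frac{N\alpha^{1/N}}{1-\alpha}\Big)^{\frac{N}{N-1}},\qquad M\ge\Big(\frac{1}{\alpha^{1/N}-\beta^{1/(N-1)}}\Big)^N, \] \[ M\le\Big(\frac{(\frac{N}{N+1}\gamma)^{1/N}-1}{\alpha^{1/N}}\min_{k}I_k\Big)^N,\quad M\le\tfrac12\Big((1-\delta)I+\sum_k I_kR\Big),\quad M\le\Big(\big(3^{-(2-1/N)}-\epsilon\big)NIR\Big)^{\frac{N}{2N-1}} . \] Let $b=\lfloor(\alpha M)^{1/N}\rfloor$. Then $b\ge1$, $b^N+Nb\le M$, and \[ W_{ub}(b)\le\frac{\gamma}{\beta}\Big(I+\frac{NIR}{M^{1-1/N}}\Big)\le \frac{2\gamma}{\beta\min(\delta,\epsilon)}\max(W_{lb1},W_{lb2}), \] with $\max(W_{lb1},W_{lb2})>0$.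
   Context: $W_{ub}(b)$ is the communication cost of the blocked sequential MTTKRP algorithm with block size $b$ (valid when $b^N+Nb\le M$), while $W_{lb1}$ and $W_{lb2}$ are lower bounds on the loads and stores of any sequential MTTKRP algorithm with fast memory size $M$; the claim is a statement purely about these quantities. *)

theory Defs
  imports Complex_Main
begin

definition tensor_size :: "nat \<Rightarrow> (nat \<Rightarrow> nat) \<Rightarrow> nat" where
  "tensor_size N Is = (\<Prod>k\<in>{1..N}. Is k)"

definition W_ub :: "nat \<Rightarrow> (nat \<Rightarrow> nat) \<Rightarrow> nat \<Rightarrow> nat \<Rightarrow> real" where
  "W_ub N Is R b = real (tensor_size N Is)
     + real (N + 1) * (\<Prod>k\<in>{1..N}. real_of_int \<lceil>real (Is k) / real b\<rceil>) * real b * real R"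

definition W_lb1 :: "nat \<Rightarrow> (nat \<Rightarrow> nat) \<Rightarrow> nat \<Rightarrow> nat \<Rightarrow> real" where
  "W_lb1 N Is R M = real N * real (tensor_size N Is) * real R
     / (3 powr (2 - 1 / real N) * real M powr (1 - 1 / real N)) - real M"

definition W_lb2 :: "nat \<Rightarrow> (nat \<Rightarrow> nat) \<Rightarrow> nat \<Rightarrow> nat \<Rightarrow> real" where
  "W_lb2 N Is R M = real (tensor_size N Is) + (\<Sum>k\<in>{1..N}. real (Is k) * real R) - 2 * real M"

end

theory Submission
  imports Defs
begin

theorem theorem4:
  fixes N R M :: nat and Is :: "nat \<Rightarrow> nat"
    and \<alpha> \<beta> \<gamma> \<delta> \<epsilon> :: real
  assumes hN: "N \<ge> 2"
    and hIs: "\<And>k. k \<in> {1..N} \<Longrightarrow> Is k > 0"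
    and hR: "R > 0" and hM: "M > 0"
    and ha: "0 < \<alpha>" "\<alpha> < 1"
    and hb: "0 < \<beta>" "\<beta> < \<alpha> powr (1 - 1 / real N)"
    and hg: "0 < \<gamma>" "\<gamma> > 1 + 1 / real N"
    and hd: "0 < \<delta>"
      "\<delta> < 1 + real R * (\<Sum>k\<in>{1..N}. real (Is k)) / real (tensor_size N Is)"
    and he: "0 < \<epsilon>" "\<epsilon> < 3 powr (- (2 - 1 / real N))"
    and hM1: "real M \<ge> (real N * \<alpha> powr (1 / real N) / (1 - \<alpha>)) powr (real N / (real N - 1))"
    and hM2: "real M \<ge> (1 / (\<alpha> powr (1 / real N) - \<beta> powr (1 / (real N - 1)))) ^ N"
    and hM3: "real M \<le> (((real N / (real N + 1) * \<gamma>) powr (1 / real N) - 1) / \<alpha> powr (1 / real N)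
                 * real (Min (Is ` {1..N}))) ^ N"
    and hM4: "real M \<le> 1 / 2 * ((1 - \<delta>) * real (tensor_size N Is)
                 + (\<Sum>k\<in>{1..N}. real (Is k)) * real R)"
    and hM5: "real M \<le> ((3 powr (- (2 - 1 / real N)) - \<epsilon>) * real N * real (tensor_size N Is) * real R)
                 powr (real N / (2 * real N - 1))"
  shows "let b = nat \<lfloor>(\<alpha> * real M) powr (1 / real N)\<rfloor> in
           b \<ge> 1 \<and> b ^ N + N * b \<le> M
         \<and> W_ub N Is R b \<le> \<gamma> / \<beta> * (real (tensor_size N Is)
               + real N * real (tensor_size N Is) * real R / real M powr (1 - 1 / real N))
         \<and> \<gamma> / \<beta> * (real (tensor_size N Is)
               + real N * real (tensor_size N Is) * real R / real M powr (1 - 1 / real N))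
             \<le> 2 * \<gamma> / (\<beta> * min \<delta> \<epsilon>) * max (W_lb1 N Is R M) (W_lb2 N Is R M)
         \<and> max (W_lb1 N Is R M) (W_lb2 N Is R M) > 0"
proof -
  define n where "n = real N"
  define I where "I = real (tensor_size N Is)"
  define S where "S = (\<Sum>k\<in>{1..N}. real (Is k))"
  define mI where "mI = real (Min (Is ` {1..N}))"
  define a where "a = \<alpha> powr (1 / n)"
  define m where "m = real M powr (1 / n)"
  define b where "b = nat \<lfloor>(\<alpha> * real M) powr (1 / real N)\<rfloor>"
  define bt where "bt = \<beta> powr (1 / (n - 1))"
  obtain k0 where Nk: "N = Suc k0" using hN by (cases N) auto
  have n2: "n \<ge> 2" using hN n_def by simp
  have N1: "real (N - 1) = n - 1" using hN n_def by simp
  have Mpos: "real M > 0" using hM by simp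
  have apos: "a > 0" using ha a_def by simp
  have mpos: "m > 0" using Mpos m_def by simp
  have btpos: "bt > 0" using hb bt_def by simp
  have mN: "m ^ N = real M"
  proof -
    have "m ^ N = m powr n" using mpos n_def by (simp add: powr_realpow)
    also have "\<dots> = real M" using Mpos n2 m_def by (simp add: powr_powr)
    finally show ?thesis .
  qed
  have aN: "a ^ N = \<alpha>"
  proof -
    have "a ^ N = a powr n" using apos n_def by (simp add: powr_realpow)
    also have "\<dots> = \<alpha>" using ha n2 a_def by (simp add: powr_powr)
    finally show ?thesis .
  qed
  have aN1: "a ^ (N - 1) = \<alpha> powr (1 - 1 / n)"
  proof -
    have "a ^ (N - 1) = a powr (n - 1)" using apos N1 by (metis powr_realpow)
    also have "\<dots> = \<alpha> powr (1 - 1 / n)" using ha n2 a_def by (simp add: powr_powr field_simps)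
    finally show ?thesis .
  qed
  have mN1: "m ^ (N - 1) = real M powr (1 - 1 / n)"
  proof -
    have "m ^ (N - 1) = m powr (n - 1)" using mpos N1 by (metis powr_realpow)
    also have "\<dots> = real M powr (1 - 1 / n)" using Mpos n2 m_def by (simp add: powr_powr field_simps)
    finally show ?thesis .
  qed
  have btN1: "bt ^ (N - 1) = \<beta>"
  proof -
    have "bt ^ (N - 1) = bt powr (n - 1)" using btpos N1 by (metis powr_realpow)
    also have "\<dots> = \<beta>" using hb n2 bt_def by (simp add: powr_powr)
    finally show ?thesis .
  qed
  have a1: "a < 1"
  proof -
    have "\<alpha> powr (1 / n) < 1 powr (1 / n)" using ha n2 by (intro powr_less_mono2) auto
    then show ?thesis using a_def by simp
  qed
  have bta: "bt < a"
  proof (rule ccontr)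
    assume "\<not> bt < a"
    then have "a ^ (N - 1) \<le> bt ^ (N - 1)" using apos by (simp add: power_mono)
    then show False using hb aN1 btN1 n_def by simp
  qed
  have xdef: "(\<alpha> * real M) powr (1 / real N) = a * m"
    using ha Mpos a_def m_def n_def by (simp add: powr_mult)
  have bx: "real b \<le> a * m" "real b > a * m - 1"
    using xdef b_def apos mpos by auto
  have m2: "m \<ge> 1 / (a - bt)"
  proof -
    have "(1 / (a - bt)) ^ N \<le> m ^ N" using hM2 mN a_def bt_def n_def by simp
    then show ?thesis using mpos power_le_imp_le_base[of _ k0] Nk by (metis less_imp_le)
  qed
  have amb: "(a - bt) * m \<ge> 1" using m2 bta by (simp add: field_simps)
  have bbt: "real b > bt * m" using bx amb by (simp add: algebra_simps)
  have bge1: "b \<ge> 1"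
  proof -
    have "real b > 0" using bbt btpos mpos by (smt (verit) mult_pos_pos)
    then show ?thesis by simp
  qed
  have bpos: "real b > 0" using bge1 by simp
  have mNs: "m ^ N = m ^ (N - 1) * m" using hN by (cases N) (simp_all add: mult.commute)
  have bNs: "real b ^ N = real b ^ (N - 1) * real b" using hN by (cases N) (simp_all add: mult.commute)
  have m1: "m ^ (N - 1) \<ge> n * a / (1 - \<alpha>)"
  proof -
    define K where "K = n * a / (1 - \<alpha>)"
    have Kpos: "K > 0" using K_def n2 apos ha by simp
    have "K powr (n / (n - 1)) \<le> real M" using hM1 K_def n_def a_def by simp
    then have "(K powr (n / (n - 1))) powr ((n - 1) / n) \<le> real M powr ((n - 1) / n)"
      using n2 by (intro powr_mono2) auto
    moreover have "(K powr (n / (n - 1))) powr ((n - 1) / n) = K"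
      using Kpos n2 by (simp add: powr_powr)
    moreover have "real M powr ((n - 1) / n) = m ^ (N - 1)"
      using mN1 n2 by (simp add: field_simps)
    ultimately show ?thesis using K_def by simp
  qed
  have bN: "b ^ N + N * b \<le> M"
  proof -
    have "real b ^ N \<le> (a * m) ^ N" using bx bpos by (intro power_mono) auto
    also have "\<dots> = \<alpha> * real M" using aN mN by (simp add: power_mult_distrib)
    finally have 1: "real b ^ N \<le> \<alpha> * real M" .
    have "n * real b \<le> n * (a * m)" using bx n2 by simp
    also have "\<dots> = (n * a / (1 - \<alpha>)) * m * (1 - \<alpha>)" using ha by (simp add: field_simps)
    also have "\<dots> \<le> m ^ (N - 1) * m * (1 - \<alpha>)"
      using m1 mpos ha by (intro mult_right_mono) auto
    also have "\<dots> = (1 - \<alpha>) * real M" using mNs mN by simp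
    finally have 2: "n * real b \<le> (1 - \<alpha>) * real M" .
    have "real (b ^ N + N * b) \<le> real M" using 1 2 n_def by (simp add: algebra_simps)
    then show ?thesis by linarith
  qed
  have fin: "finite {1..N}" by simp
  have ne: "{1..N} \<noteq> {}" using hN by simp
  have mIle: "\<And>k. k \<in> {1..N} \<Longrightarrow> mI \<le> real (Is k)"
    using mI_def fin by simp
  have mIpos: "mI > 0"
  proof -
    have "Min (Is ` {1..N}) \<in> Is ` {1..N}" using fin ne by (intro Min_in) auto
    then show ?thesis using hIs mI_def by auto
  qed
  define c where "c = (n / (n + 1) * \<gamma>) powr (1 / n)"
  have g1: "n / (n + 1) * \<gamma> > 1"
  proof -
    have "n / (n + 1) * \<gamma> > n / (n + 1) * (1 + 1 / n)" using hg n_def n2 by (intro mult_strict_left_mono) auto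
    also have "n / (n + 1) * (1 + 1 / n) = 1"
    proof -
      have "n + 1 > 0" "n > 0" using n2 by auto
      then show ?thesis by (simp add: field_simps) (smt (verit) mult_pos_pos)
    qed
    finally show ?thesis .
  qed
  have c1: "c > 1" using c_def g1 n2 by simp
  have cN: "c ^ N = n / (n + 1) * \<gamma>"
  proof -
    have "c ^ N = c powr n" using c1 n_def by (simp add: powr_realpow)
    also have "\<dots> = n / (n + 1) * \<gamma>" using g1 n2 c_def by (simp add: powr_powr)
    finally show ?thesis .
  qed
  have m3: "m \<le> (c - 1) / a * mI"
  proof -
    have "m ^ N \<le> ((c - 1) / a * mI) ^ N" using hM3 mN c_def a_def mI_def n_def by simp
    moreover have "(c - 1) / a * mI \<ge> 0" using c1 apos mIpos by simp
    ultimately show ?thesis using power_le_imp_le_base[of _ k0] Nk by metis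
  qed
  have bc: "real b \<le> (c - 1) * mI"
  proof -
    have "real b \<le> a * m" using bx by simp
    also have "\<dots> \<le> a * ((c - 1) / a * mI)" using m3 apos by (intro mult_left_mono) auto
    also have "\<dots> = (c - 1) * mI" using apos by simp
    finally show ?thesis .
  qed
  have fac: "\<And>k. k \<in> {1..N} \<Longrightarrow> 0 \<le> real_of_int \<lceil>real (Is k) / real b\<rceil>
        \<and> real_of_int \<lceil>real (Is k) / real b\<rceil> \<le> real (Is k) * (c / real b)"
  proof -
    fix k assume k: "k \<in> {1..N}"
    have "real_of_int \<lceil>real (Is k) / real b\<rceil> \<le> real (Is k) / real b + 1" by simp
    also have "\<dots> = (real (Is k) + real b) / real b" using bpos by (simp add: field_simps)
    also have "\<dots> \<le> (real (Is k) + (c - 1) * real (Is k)) / real b"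
    proof -
      have "real b \<le> (c - 1) * real (Is k)"
        using bc mIle[OF k] c1 by (smt (verit) mult_left_mono)
      then show ?thesis using bpos by (intro divide_right_mono) auto
    qed
    also have "\<dots> = real (Is k) * (c / real b)" by (simp add: algebra_simps)
    finally have up: "real_of_int \<lceil>real (Is k) / real b\<rceil> \<le> real (Is k) * (c / real b)" .
    have "real (Is k) / real b \<ge> 0" by simp
    then have "0 \<le> real_of_int \<lceil>real (Is k) / real b\<rceil>" by linarith
    with up show "0 \<le> real_of_int \<lceil>real (Is k) / real b\<rceil>
        \<and> real_of_int \<lceil>real (Is k) / real b\<rceil> \<le> real (Is k) * (c / real b)" by simp
  qed
  have prodle: "(\<Prod>k\<in>{1..N}. real_of_int \<lceil>real (Is k) / real b\<rceil>) \<le> I * (c / real b) ^ N"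
  proof -
    have "(\<Prod>k\<in>{1..N}. real_of_int \<lceil>real (Is k) / real b\<rceil>) \<le> (\<Prod>k\<in>{1..N}. real (Is k) * (c / real b))"
      using fac by (intro prod_mono) auto
    also have "\<dots> = I * (c / real b) ^ N"
      by (simp only: prod.distrib I_def tensor_size_def of_nat_prod prod_constant card_atLeastAtMost) simp
    finally show ?thesis .
  qed
  have bb: "real b ^ (N - 1) \<ge> \<beta> * m ^ (N - 1)"
  proof -
    have "(bt * m) ^ (N - 1) \<le> real b ^ (N - 1)" using bbt btpos mpos by (intro power_mono) auto
    then show ?thesis using btN1 by (simp add: power_mult_distrib)
  qed
  have Ipos: "I > 0" unfolding I_def tensor_size_def of_nat_prod
    using hIs by (intro prod_pos) auto
  have b1: "\<beta> < 1"
  proof -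
    have "a ^ (N - 1) \<le> 1" using apos a1 by (simp add: power_le_one)
    then show ?thesis using hb aN1 n_def by simp
  qed
  have g1': "\<gamma> > 1" using hg n2 n_def by (smt (verit) divide_pos_pos)
  have gb: "\<gamma> / \<beta> \<ge> 1" using b1 hb g1' by (simp add: field_simps)
  define T where "T = n * I * real R / m ^ (N - 1)"
  have Wub: "W_ub N Is R b \<le> \<gamma> / \<beta> * (I + T)"
  proof -
    have "W_ub N Is R b = I + (n + 1) * (\<Prod>k\<in>{1..N}. real_of_int \<lceil>real (Is k) / real b\<rceil>) * real b * real R"
      unfolding W_ub_def I_def n_def by simp
    also have "\<dots> \<le> I + (n + 1) * (I * (c / real b) ^ N) * real b * real R"
      using prodle n2 bpos hR by (intro add_left_mono mult_right_mono mult_left_mono) auto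
    also have "(n + 1) * (I * (c / real b) ^ N) * real b * real R = n * \<gamma> * I * real R / real b ^ (N - 1)"
      using cN bNs bpos n2 by (simp add: power_divide field_simps)
    also have "\<dots> \<le> n * \<gamma> * I * real R / (\<beta> * m ^ (N - 1))"
    proof -
      have p1: "\<beta> * m ^ (N - 1) > 0" using hb mpos by simp
      have p2: "n * \<gamma> * I * real R \<ge> 0" using n2 hg Ipos by simp
      have p3: "real b ^ (N - 1) * (\<beta> * m ^ (N - 1)) > 0" using p1 bpos by simp
      show ?thesis using divide_left_mono[OF bb p2 p3] .
    qed
    also have "\<dots> = \<gamma> / \<beta> * T" using T_def by (simp add: field_simps)
    finally have "W_ub N Is R b \<le> I + \<gamma> / \<beta> * T" by simp
    moreover have "I \<le> \<gamma> / \<beta> * I" using mult_right_mono[OF gb, of I] Ipos by simp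
    ultimately show ?thesis by (simp add: distrib_left)
  qed
  define t where "t = 3 powr (- (2 - 1 / n))"
  have tpos: "t > 0" using t_def by simp
  have W1: "W_lb1 N Is R M = t * T - real M"
  proof -
    have t': "t = 1 / 3 powr (2 - 1 / n)" unfolding t_def powr_minus by (simp add: divide_inverse)
    show ?thesis
    unfolding W_lb1_def t' T_def mN1[symmetric] I_def[symmetric] n_def[symmetric]
    by simp
  qed
  have W1ge: "W_lb1 N Is R M \<ge> \<epsilon> * T"
  proof -
    define K where "K = (t - \<epsilon>) * n * I * real R"
    have Kpos: "K > 0" using K_def he t_def n2 Ipos hR n_def by simp
    have "real M \<le> K powr (n / (2 * n - 1))" using hM5 K_def t_def n_def I_def by simp
    then have "real M powr ((2 * n - 1) / n) \<le> (K powr (n / (2 * n - 1))) powr ((2 * n - 1) / n)"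
      using n2 by (intro powr_mono2) auto
    also have "\<dots> = K" using Kpos n2 by (simp add: powr_powr)
    also have "real M powr ((2 * n - 1) / n) = real M * m ^ (N - 1)"
    proof -
      have "(2 * n - 1) / n = 1 + (1 - 1 / n)" using n2 by (simp add: field_simps)
      then have "real M powr ((2 * n - 1) / n) = real M powr 1 * real M powr (1 - 1 / n)"
        by (simp only: powr_add)
      then show ?thesis using Mpos mN1 by simp
    qed
    finally have "real M * m ^ (N - 1) \<le> K" .
    then have "real M \<le> K / m ^ (N - 1)" using mpos by (simp add: field_simps)
    also have "\<dots> = (t - \<epsilon>) * T" using K_def T_def by simp
    finally show ?thesis using W1 by (simp add: algebra_simps)
  qed
  have W2ge: "W_lb2 N Is R M \<ge> \<delta> * I"
  proof -
    have "(\<Sum>k\<in>{1..N}. real (Is k) * real R) = S * real R" using S_def by (simp add: sum_distrib_right)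
    then show ?thesis using hM4 unfolding W_lb2_def I_def S_def by (simp add: algebra_simps)
  qed
  define Mx where "Mx = max (W_lb1 N Is R M) (W_lb2 N Is R M)"
  define d where "d = min \<delta> \<epsilon>"
  have dpos: "d > 0" using d_def hd he by simp
  have Mxpos: "Mx > 0" using W2ge hd Ipos Mx_def by (smt (verit) mult_pos_pos)
  have sum2: "I + T \<le> 2 * Mx / d"
  proof -
    have "I \<le> Mx / d"
    proof -
      have "d * I \<le> \<delta> * I" using d_def Ipos by (simp add: mult_right_mono)
      also have "\<dots> \<le> Mx" using W2ge Mx_def by simp
      finally show ?thesis using dpos by (simp add: field_simps)
    qed
    moreover have "T \<le> Mx / d"
    proof -
      have Tpos: "T \<ge> 0" using T_def n2 Ipos mpos by simp
      have "d * T \<le> \<epsilon> * T" using d_def Tpos by (simp add: mult_right_mono)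
      also have "\<dots> \<le> Mx" using W1ge Mx_def by simp
      finally show ?thesis using dpos by (simp add: field_simps)
    qed
    ultimately show ?thesis by simp
  qed
  have fin2: "\<gamma> / \<beta> * (I + T) \<le> 2 * \<gamma> / (\<beta> * d) * Mx"
  proof -
    have "\<gamma> / \<beta> * (I + T) \<le> \<gamma> / \<beta> * (2 * Mx / d)" using sum2 gb by (intro mult_left_mono) auto
    also have "\<dots> = 2 * \<gamma> / (\<beta> * d) * Mx" by simp
    finally show ?thesis .
  qed
  have Teq: "T = real N * I * real R / real M powr (1 - 1 / real N)"
    using T_def mN1 n_def I_def by simp
  show ?thesis
    unfolding Let_def b_def[symmetric] I_def[symmetric] Teq[symmetric] Mx_def[symmetric] d_def[symmetric]
    using bge1 bN Wub fin2 Mxpos by simp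
qed
end
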